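(* With $G$, $d$, $G_0$, $X$ and the topology $\tau$ as in the context, the space $(X,\tau)$ is Hausdorff.
   Context: Let $G$ be a Polish group, $d$ a compatible right-invariant metric on $G$ (i.e. $d(g_0h,g_1h)=d(g_0,g_1)$) bounded by $1$, and $G_0$ a countable dense subgroup of $G$. Let $\mathcal L(G,d)$ be the set of functions $f:G\to[0,1]$ with $|f(g_1)-f(g_2)|\le d(g_1,g_2)$ for all $g_1,g_2$. Let $\mathbb Q^{<\mathbb N}$ be the set of finite sequences of rationals; for $s\in\mathbb Q^{<\mathbb N}$ and rationals $a_1,\dots,a_k$, $sa_1\dots a_k$ denotes the sequence $s$ followed by $a_1,\dots,a_k$ (natural numbers are regarded as rationals). Elements of $\mathcal L(G,d)^{\mathbb Q^{<\mathbb N}}$ are families $\vec f=(f_s)_{s\in\mathbb Q^{<\mathbb N}}$, and $G$ acts by $(g\cdot\vec f)_s(g_0)=f_s(g_0g)$. Let $X$ be the set of $\vec f\in\mathcal L(G,d)^{\mathbb Q^{<\mathbb N}}$ such that, writing $t=sq_0q_1q_2\,0\,m\,n$ and $u=sq_0q_1q_2\,1\,m\,n$: (1) for all $s\in\mathbb Q^{<\mathbb N}$, $g_0\in G_0$, $m,n\in\mathbb N$, $q_0,q_1,q_2,\epsilon\in\mathbb Q\cap(0,1)$ with $0<q_i\pm\epsilon<1$ ($i=0,1,2$): $f_t(g_0)<q_1-\epsilon$ or $f_s(g_0)\le q_0+\epsilon$; (2) for the same range of parameters: $f_u(g_0)\ge q_2+\epsilon$ or $f_t(g_0)\ge q_1-\epsilon$;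 (3) for all $s\in\mathbb Q^{<\mathbb N}$, $g_0\in G_0$, $q_0,\epsilon\in\mathbb Q\cap(0,1)$: if $f_s(g_0)<q_0$ then there are $q_1,q_2\in\mathbb Q$, $g_1\in G_0$, $m,n\in\mathbb N$ with $0<q_2<q_1<q_0<1$, $d(g_0,g_1)<\epsilon$, and $f_u(g_1)<q_2$ where $u=sq_0q_1q_2\,1\,m\,n$. The topology $\tau$ on $X$ is the one generated by the subbasis of all sets $\{\vec f\in X: f_s(g_0)<q_0\}$ for $s\in\mathbb Q^{<\mathbb N}$, $g_0\in G_0$, $q_0\in\mathbb Q$. *)

theory Defs
  imports "HOL-Analysis.Analysis" "HOL-Algebra.Group"
begin

definition Polish_group_metric :: "('g, 'b) monoid_scheme \<Rightarrow> ('g \<Rightarrow> 'g \<Rightarrow> real) \<Rightarrow> bool" where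
  "Polish_group_metric G d \<longleftrightarrow>
     group G \<and> Metric_space (carrier G) d \<and>
     completely_metrizable_space (Metric_space.mtopology (carrier G) d) \<and>
     separable_space (Metric_space.mtopology (carrier G) d) \<and>
     continuous_map (prod_topology (Metric_space.mtopology (carrier G) d)
                                   (Metric_space.mtopology (carrier G) d))
                    (Metric_space.mtopology (carrier G) d) (\<lambda>(x, y). x \<otimes>\<^bsub>G\<^esub> y) \<and>
     continuous_map (Metric_space.mtopology (carrier G) d)
                    (Metric_space.mtopology (carrier G) d) (\<lambda>x. inv\<^bsub>G\<^esub> x)"

definition right_invariant_bounded :: "('g, 'b) monoid_scheme \<Rightarrow> ('g \<Rightarrow> 'g \<Rightarrow> real) \<Rightarrow> bool" where
  "right_invariant_bounded G d \<longleftrightarrow>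
     (\<forall>g0\<in>carrier G. \<forall>g1\<in>carrier G. \<forall>h\<in>carrier G.
        d (g0 \<otimes>\<^bsub>G\<^esub> h) (g1 \<otimes>\<^bsub>G\<^esub> h) = d g0 g1) \<and>
     (\<forall>g0\<in>carrier G. \<forall>g1\<in>carrier G. d g0 g1 \<le> 1)"

definition Lip1 :: "('g, 'b) monoid_scheme \<Rightarrow> ('g \<Rightarrow> 'g \<Rightarrow> real) \<Rightarrow> ('g \<Rightarrow> real) set" where
  "Lip1 G d = {f \<in> extensional (carrier G).
      (\<forall>g\<in>carrier G. 0 \<le> f g \<and> f g \<le> 1) \<and>
      (\<forall>g1\<in>carrier G. \<forall>g2\<in>carrier G. \<bar>f g1 - f g2\<bar> \<le> d g1 g2)}"

definition Qunit :: "rat set" where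
  "Qunit = {q. 0 < q \<and> q < 1}"

text \<open>The space X. A family is indexed by finite sequences of rationals (rat list);
  \<open>s a1 ... ak\<close> is \<open>s @ [a1,...,ak]\<close>, with naturals viewed as rationals via of_nat.\<close>
definition Xspace :: "('g, 'b) monoid_scheme \<Rightarrow> ('g \<Rightarrow> 'g \<Rightarrow> real) \<Rightarrow> 'g set
                       \<Rightarrow> (rat list \<Rightarrow> 'g \<Rightarrow> real) set" where
  "Xspace G d G0 = {F. (\<forall>s. F s \<in> Lip1 G d) \<and>
     (\<forall>s. \<forall>g0\<in>G0. \<forall>m n :: nat. \<forall>q0\<in>Qunit. \<forall>q1\<in>Qunit. \<forall>q2\<in>Qunit. \<forall>\<epsilon>\<in>Qunit.
        (\<forall>q\<in>{q0,q1,q2}. 0 < q - \<epsilon> \<and> q - \<epsilon> < 1 \<and> 0 < q + \<epsilon> \<and> q + \<epsilon> < 1) \<longrightarrow>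
        (F (s @ [q0, q1, q2, 0, of_nat m, of_nat n]) g0 < of_rat (q1 - \<epsilon>)
           \<or> F s g0 \<le> of_rat (q0 + \<epsilon>)) \<and>
        (F (s @ [q0, q1, q2, 1, of_nat m, of_nat n]) g0 \<ge> of_rat (q2 + \<epsilon>)
           \<or> F (s @ [q0, q1, q2, 0, of_nat m, of_nat n]) g0 \<ge> of_rat (q1 - \<epsilon>))) \<and>
     (\<forall>s. \<forall>g0\<in>G0. \<forall>q0\<in>Qunit. \<forall>\<epsilon>\<in>Qunit.
        F s g0 < of_rat q0 \<longrightarrow>
        (\<exists>q1 q2 :: rat. \<exists>g1\<in>G0. \<exists>m n :: nat.
           0 < q2 \<and> q2 < q1 \<and> q1 < q0 \<and> q0 < 1 \<and> d g0 g1 < of_rat \<epsilon> \<and>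
           F (s @ [q0, q1, q2, 1, of_nat m, of_nat n]) g1 < of_rat q2))}"

definition tau :: "('g, 'b) monoid_scheme \<Rightarrow> ('g \<Rightarrow> 'g \<Rightarrow> real) \<Rightarrow> 'g set
                    \<Rightarrow> (rat list \<Rightarrow> 'g \<Rightarrow> real) topology" where
  "tau G d G0 = topology_generated_by
     {{F \<in> Xspace G d G0. F s g0 < of_rat q0} | s g0 q0. g0 \<in> G0}"

end

theory Submission
  imports Defs
begin

lemma X_c12:
  assumes "F \<in> Xspace G d G0" "g0 \<in> G0" "q0 \<in> Qunit" "q1 \<in> Qunit" "q2 \<in> Qunit" "e \<in> Qunit"
    "\<forall>q\<in>{q0,q1,q2}. 0 < q - e \<and> q - e < 1 \<and> 0 < q + e \<and> q + e < 1"
  shows "(F (s @ [q0, q1, q2, 0, of_nat m, of_nat n]) g0 < of_rat (q1 - e)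
           \<or> F s g0 \<le> of_rat (q0 + e)) \<and>
        (F (s @ [q0, q1, q2, 1, of_nat m, of_nat n]) g0 \<ge> of_rat (q2 + e)
           \<or> F (s @ [q0, q1, q2, 0, of_nat m, of_nat n]) g0 \<ge> of_rat (q1 - e))"
proof -
  have "\<forall>s. \<forall>g0\<in>G0. \<forall>m n :: nat. \<forall>q0\<in>Qunit. \<forall>q1\<in>Qunit. \<forall>q2\<in>Qunit. \<forall>\<epsilon>\<in>Qunit.
        (\<forall>q\<in>{q0,q1,q2}. 0 < q - \<epsilon> \<and> q - \<epsilon> < 1 \<and> 0 < q + \<epsilon> \<and> q + \<epsilon> < 1) \<longrightarrow>
        (F (s @ [q0, q1, q2, 0, of_nat m, of_nat n]) g0 < of_rat (q1 - \<epsilon>)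
           \<or> F s g0 \<le> of_rat (q0 + \<epsilon>)) \<and>
        (F (s @ [q0, q1, q2, 1, of_nat m, of_nat n]) g0 \<ge> of_rat (q2 + \<epsilon>)
           \<or> F (s @ [q0, q1, q2, 0, of_nat m, of_nat n]) g0 \<ge> of_rat (q1 - \<epsilon>))"
    using assms(1) unfolding Xspace_def mem_Collect_eq by (rule conjunct1[OF conjunct2])
  then show ?thesis using assms(2-7) by blast
qed

lemma X_c3:
  assumes "F \<in> Xspace G d G0" "g0 \<in> G0" "q0 \<in> Qunit" "e \<in> Qunit" "F s g0 < of_rat q0"
  shows "\<exists>q1 q2 :: rat. \<exists>g1\<in>G0. \<exists>m n :: nat.
           0 < q2 \<and> q2 < q1 \<and> q1 < q0 \<and> q0 < 1 \<and> d g0 g1 < of_rat e \<and>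
           F (s @ [q0, q1, q2, 1, of_nat m, of_nat n]) g1 < of_rat q2"
proof -
  have "\<forall>s. \<forall>g0\<in>G0. \<forall>q0\<in>Qunit. \<forall>\<epsilon>\<in>Qunit.
        F s g0 < of_rat q0 \<longrightarrow>
        (\<exists>q1 q2 :: rat. \<exists>g1\<in>G0. \<exists>m n :: nat.
           0 < q2 \<and> q2 < q1 \<and> q1 < q0 \<and> q0 < 1 \<and> d g0 g1 < of_rat \<epsilon> \<and>
           F (s @ [q0, q1, q2, 1, of_nat m, of_nat n]) g1 < of_rat q2)"
    using assms(1) unfolding Xspace_def mem_Collect_eq by (rule conjunct2[OF conjunct2])
  then show ?thesis using assms(2-5) by blast
qed

lemma sep_lemma:
  assumes F: "F \<in> Xspace G d G0" and F': "F' \<in> Xspace G d G0" and g0: "g0 \<in> G0"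
    and lt: "F s g0 < F' s g0"
    and G0sub: "G0 \<subseteq> carrier G" and M: "Metric_space (carrier G) d"
  shows "\<exists>U V. openin (tau G d G0) U \<and> openin (tau G d G0) V \<and> F \<in> U \<and> F' \<in> V \<and> disjnt U V"
proof -
  define a where "a = F s g0"
  define b where "b = F' s g0"
  define \<delta> where "\<delta> = b - a"
  have g0c: "g0 \<in> carrier G" using g0 G0sub by auto
  have FL: "F s \<in> Lip1 G d" and F'L: "\<And>t. F' t \<in> Lip1 G d" using F F' unfolding Xspace_def by auto
  have a0: "0 \<le> a" using FL g0c unfolding a_def Lip1_def by auto
  have b1: "b \<le> 1" using F'L[of s] g0c unfolding b_def Lip1_def by auto
  have dpos: "\<delta> > 0" using lt unfolding a_def b_def \<delta>_def by simp
  obtain q0 :: rat where q0: "a < of_rat q0" "of_rat q0 < a + \<delta>/3"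
    using of_rat_dense[of a "a + \<delta>/3"] dpos by auto
  have "\<exists>q::rat. (0::real) < of_rat q \<and> of_rat q < \<delta>/3"
    using of_rat_dense[of "0::real" "\<delta>/3"] dpos by auto
  then obtain e' :: rat where e': "(0::real) < of_rat e'" "of_rat e' < \<delta>/3" by blast
  have "(0::real) < of_rat q0" "of_rat q0 < (1::real)" using q0 a0 b1 dpos \<delta>_def by linarith+
  then have q0Q: "q0 \<in> Qunit" unfolding Qunit_def by simp
  have "of_rat e' < (1::real)" using e' a0 b1 \<delta>_def by linarith
  then have e'Q: "e' \<in> Qunit" unfolding Qunit_def using e' by simp
  have "F s g0 < of_rat q0" using q0 a_def by simp
  then obtain q1 q2 :: rat and g1 and m n :: nat where
    c3: "0 < q2" "q2 < q1" "q1 < q0" "q0 < 1" "d g0 g1 < of_rat e'" "g1 \<in> G0"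
       "F (s @ [q0, q1, q2, 1, of_nat m, of_nat n]) g1 < of_rat q2"
    using X_c3[OF F g0 q0Q e'Q] by blast
  have g1c: "g1 \<in> carrier G" using c3 G0sub by auto
  have "(0::real) < min (of_rat q2) (min (1 - of_rat q0) (\<delta>/3))"
    using dpos c3 by (simp add: of_rat_less_1_iff)
  then have "\<exists>q::rat. (0::real) < of_rat q \<and> of_rat q < min (of_rat q2) (min (1 - of_rat q0) (\<delta>/3))"
    using of_rat_dense by blast
  then obtain e :: rat where e: "(0::real) < of_rat e" "of_rat e < min (of_rat q2) (min (1 - of_rat q0) (\<delta>/3))"
    by blast
  have eR1: "0 < e" using e by simp
  have "(of_rat e::real) < of_rat q2" using e by simp
  then have eR2: "e < q2" by (simp only: of_rat_less)
  have "(of_rat (q0 + e)::real) < 1" using e by (simp add: of_rat_add)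
  then have eR3: "q0 + e < 1" by (simp only: of_rat_less_1_iff)
  note eR = eR1 eR2 eR3
  have eQ: "e \<in> Qunit" using eR c3 unfolding Qunit_def by auto
  have q1Q: "q1 \<in> Qunit" and q2Q: "q2 \<in> Qunit" using c3 unfolding Qunit_def by auto
  have conds: "\<forall>q\<in>{q0,q1,q2}. 0 < q - e \<and> q - e < 1 \<and> 0 < q + e \<and> q + e < 1"
    using eR c3 by auto
  define t where "t = s @ [q0, q1, q2, 0, of_nat m, of_nat n]"
  define u where "u = s @ [q0, q1, q2, 1, of_nat m, of_nat n]"
  have c12: "\<And>H. H \<in> Xspace G d G0 \<Longrightarrow>
      (H t g1 < of_rat (q1 - e) \<or> H s g1 \<le> of_rat (q0 + e)) \<and>
      (H u g1 \<ge> of_rat (q2 + e) \<or> H t g1 \<ge> of_rat (q1 - e))"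
  proof -
    fix H assume "H \<in> Xspace G d G0"
    then show "(H t g1 < of_rat (q1 - e) \<or> H s g1 \<le> of_rat (q0 + e)) \<and>
      (H u g1 \<ge> of_rat (q2 + e) \<or> H t g1 \<ge> of_rat (q1 - e))"
      unfolding t_def u_def using X_c12[OF _ c3(6) q0Q q1Q q2Q eQ conds] by blast
  qed
  define U where "U = {H \<in> Xspace G d G0. H u g1 < of_rat q2}"
  define V where "V = {H \<in> Xspace G d G0. H t g1 < of_rat (q1 - e)}"
  have oU: "openin (tau G d G0) U" unfolding tau_def U_def
    by (rule topology_generated_by_Basis) (use c3(6) in blast)
  have oV: "openin (tau G d G0) V" unfolding tau_def V_def
    by (rule topology_generated_by_Basis) (use c3(6) in blast)
  have FU: "F \<in> U" unfolding U_def u_def using F c3 by auto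
  have "\<bar>F' s g0 - F' s g1\<bar> \<le> d g0 g1" using F'L[of s] g0c g1c unfolding Lip1_def by auto
  then have "F' s g1 > of_rat (q0 + e)"
  proof -
    assume h: "\<bar>F' s g0 - F' s g1\<bar> \<le> d g0 g1"
    have "(of_rat e :: real) * 3 < \<delta>" "of_rat e' * 3 < \<delta>" using e e' by auto
    then show ?thesis using h c3(5) q0 unfolding b_def \<delta>_def a_def of_rat_add abs_le_iff by (simp add: field_simps)
  qed
  then have F'V: "F' \<in> V" unfolding V_def using c12[OF F'] F' by auto
  have "disjnt U V"
  proof -
    { fix H assume "H \<in> U" "H \<in> V"
      then have "H \<in> Xspace G d G0" "H u g1 < of_rat q2" "H t g1 < of_rat (q1 - e)"
        unfolding U_def V_def by auto
      moreover have "of_rat q2 < (of_rat (q2 + e) :: real)" using eR by (simp add: of_rat_add)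
      ultimately have False using c12 by fastforce }
    then show ?thesis unfolding disjnt_def by auto
  qed
  then show ?thesis using oU oV FU F'V by blast
qed

theorem lemma2p4:
  fixes G :: "('g, 'b) monoid_scheme" and d :: "'g \<Rightarrow> 'g \<Rightarrow> real" and G0 :: "'g set"
  assumes "Polish_group_metric G d"
    and "right_invariant_bounded G d"
    and "countable G0" and "subgroup G0 G"
    and "Metric_space.mtopology (carrier G) d closure_of G0 = carrier G"
  shows "Hausdorff_space (tau G d G0)"
proof -
  have M: "Metric_space (carrier G) d" using assms(1) unfolding Polish_group_metric_def by blast
  have G0sub: "G0 \<subseteq> carrier G" using assms(4) by (rule subgroup.subset)
  have top: "topspace (tau G d G0) \<subseteq> Xspace G d G0" unfolding tau_def by auto
  show ?thesis unfolding Hausdorff_space_def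
  proof (intro allI impI, elim conjE)
    fix F F' assume F0: "F \<in> topspace (tau G d G0)" and F'0: "F' \<in> topspace (tau G d G0)"
      and ne: "F \<noteq> F'"
    have F: "F \<in> Xspace G d G0" and F': "F' \<in> Xspace G d G0" using F0 F'0 top by auto
    obtain s where ns: "F s \<noteq> F' s" using ne by auto
    have FL: "\<And>t. F t \<in> Lip1 G d" and F'L: "\<And>t. F' t \<in> Lip1 G d"
      using F F' unfolding Xspace_def by auto
    have ex: "F s \<in> extensional (carrier G)" "F' s \<in> extensional (carrier G)"
      using FL[of s] F'L[of s] unfolding Lip1_def by auto
    obtain g where g: "g \<in> carrier G" "F s g \<noteq> F' s g"
      using ns extensionalityI[OF ex] by blast
    define r where "r = \<bar>F s g - F' s g\<bar> / 3"
    have rpos: "r > 0" using g unfolding r_def by simp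
    have "g \<in> Metric_space.mtopology (carrier G) d closure_of G0" using assms(5) g by simp
    then obtain g0 where g0: "g0 \<in> G0" "g0 \<in> Metric_space.mball (carrier G) d g r"
      using rpos unfolding Metric_space.metric_closure_of[OF M] by blast
    have dg: "d g g0 < r" using g0(2) Metric_space.in_mball[OF M] by blast
    have g0c: "g0 \<in> carrier G" using g0 G0sub by auto
    have h1: "\<bar>F s g - F s g0\<bar> \<le> d g g0" and h2: "\<bar>F' s g - F' s g0\<bar> \<le> d g g0"
      using FL[of s] F'L[of s] g(1) g0c unfolding Lip1_def by auto
    have "F s g0 \<noteq> F' s g0"
    proof
      assume eq: "F s g0 = F' s g0"
      have "\<bar>F s g - F' s g\<bar> \<le> \<bar>F s g - F s g0\<bar> + \<bar>F' s g - F' s g0\<bar>"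
        using eq abs_triangle_ineq4[of "F s g - F s g0" "F' s g - F' s g0"] by simp
      then have "\<bar>F s g - F' s g\<bar> \<le> 2 * d g g0" using h1 h2 by linarith
      then show False using dg rpos unfolding r_def by (simp add: field_simps)
    qed
    then have "F s g0 < F' s g0 \<or> F' s g0 < F s g0" by auto
    then show "\<exists>U V. openin (tau G d G0) U \<and> openin (tau G d G0) V \<and> F \<in> U \<and> F' \<in> V \<and> disjnt U V"
    proof
      assume "F s g0 < F' s g0"
      then show ?thesis by (rule sep_lemma[OF F F' g0(1) _ G0sub M])
    next
      assume "F' s g0 < F s g0"
      then obtain U V where "openin (tau G d G0) U" "openin (tau G d G0) V" "F' \<in> U" "F \<in> V" "disjnt U V"
        using sep_lemma[OF F' F g0(1) _ G0sub M] by blast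
      then show ?thesis using disjnt_sym by metis
    qed
  qed
qed

end
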